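(* Let $c\ge 3$ be an integer and $\lambda,\mu,\alpha>0$ with $\lambda<c\mu$. Let $(\pi_{i,j})_{(i,j)\in\mathcal S}$ be the stationary distribution of the continuous-time Markov chain on $\mathcal S=\{(i,j):0\le i\le c,\ j\ge i\}$ whose only transitions are: $(i,j)\to(i,j+1)$ at rate $\lambda$; $(i,j)\to(i+1,j)$ at rate $\min(j-i,c-i)\alpha$ for $i<c$, $j>i$; $(i,j)\to(i,j-1)$ at rate $i\mu$ for $i\ge1$, $j>i$; $(i,i)\to(i-1,i-1)$ at rate $i\mu$ for $i\ge 1$. For $k=1,\dots,c-1$ let $f_k(z)=(\lambda+k\mu+(c-k)\alpha)z-\lambda z^2-k\mu$ and let $z_k=\frac{\lambda+k\mu+(c-k)\alpha-\sqrt{(\lambda+k\mu+(c-k)\alpha)^2-4k\lambda\mu}}{2\lambda}$, $\hat z_k=\frac{\lambda+k\mu+(c-k)\alpha+\sqrt{(\lambda+k\mu+(c-k)\alpha)^2-4k\lambda\mu}}{2\lambda}$ be its roots ($0<z_k<1<\hat z_k$); let $\hat z_0=(\lambda+c\alpha)/\lambda$. For $k=0,\dots,c-1$ let $\widehat\Pi_k(z)=\sum_{j\ge c}\pi_{k,j}z^{j-k}$. Define constants $A_{k,j}$ ($1\le k\le c-1$, $0\le j\le k$) recursively by $A_{1,0}=\frac{c\alpha\pi_{0,c-1}\hat z_0}{f_1(\hat z_0)}$, $A_{1,1}=\pi_{1,c-1}-A_{1,0}$, and for $k\ge2$: $$A_{k,j}=\frac{(c-k+1)\alpha A_{k-1,j}\hat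 z_j}{f_k(\hat z_j)}\ (0\le j\le k-1),\qquad A_{k,k}=-(c-k+1)\alpha\sum_{j=0}^{k-1}\frac{A_{k-1,j}\hat z_j}{f_k(\hat z_j)}+\pi_{k,c-1}.$$ Fix $i\in\{2,\dots,c-1\}$. Define $a^{(i)}_c=\frac{(c-i+1)\alpha\widehat\Pi_{i-1}(z_i)}{i\mu z_i^{c-i}}$, $b^{(i)}_c=\frac{\lambda z_i}{i\mu}$, and for $j=c-1,\dots,i+1$, $$a^{(i)}_j=\frac{(j-i+1)\alpha\pi_{i-1,j}+i\mu a^{(i)}_{j+1}}{\lambda+i\mu+(j-i)\alpha-i\mu b^{(i)}_{j+1}},\qquad b^{(i)}_j=\frac{\lambda}{\lambda+i\mu+(j-i)\alpha-i\mu b^{(i)}_{j+1}}.$$ Then: (i) $\pi_{i,j}=a^{(i)}_j+b^{(i)}_j\pi_{i,j-1}$ for $j=i+1,\dots,c$; (ii) $a^{(i)}_j>0$ and $0<b^{(i)}_j<\frac{\lambda}{i\mu}$ for $j=i+1,\dots,c$; (iii) if $\hat z_0,\hat z_1,\dots,\hat z_{c-1}$ are pairwise distinct, then for all complex $z$ with $|z|\le1$, $$\widehat\Pi_i(z)=z^{c-i}\sum_{j=0}^{i}\frac{A_{i,j}}{\hat z_j-z}.$$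
   Context: The chain models an M/M/$c$ queue with setup times under the ON-OFF policy: $i$ is the number of busy servers, $j$ the number of jobs; arrivals Poisson($\lambda$), services exp($\mu$), setups exp($\alpha$). The condition $\lambda<c\mu$ guarantees a unique stationary distribution. *)

theory Defs
  imports "HOL-Analysis.Analysis"
begin

text \<open>State space S = {(i,j). 0 <= i <= c, j >= i}; i = busy servers, j = jobs.\<close>
definition state_space :: "nat \<Rightarrow> (nat \<times> nat) set" where
  "state_space c = {(i, j). i \<le> c \<and> i \<le> j}"

definition rate :: "nat \<Rightarrow> real \<Rightarrow> real \<Rightarrow> real \<Rightarrow> nat \<times> nat \<Rightarrow> nat \<times> nat \<Rightarrow> real" where
  "rate c la mu al s t =
     (let (i, j) = s; (i', j') = t in
      if i' = i \<and> j' = j + 1 then la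
      else if i < c \<and> j > i \<and> i' = i + 1 \<and> j' = j then real (min (j - i) (c - i)) * al
      else if i \<ge> 1 \<and> j > i \<and> i' = i \<and> j' + 1 = j then real i * mu
      else if i \<ge> 1 \<and> j = i \<and> i' + 1 = i \<and> j' + 1 = j then real i * mu
      else 0)"

definition stationary :: "nat \<Rightarrow> real \<Rightarrow> real \<Rightarrow> real \<Rightarrow> (nat \<times> nat \<Rightarrow> real) \<Rightarrow> bool" where
  "stationary c la mu al p \<longleftrightarrow>
     (\<forall>s\<in>state_space c. p s \<ge> 0) \<and>
     (p has_sum 1) (state_space c) \<and>
     (\<forall>s\<in>state_space c.
        p s * (\<Sum>\<^sub>\<infinity>t\<in>state_space c - {s}. rate c la mu al s t) =
        (\<Sum>\<^sub>\<infinity>t\<in>state_space c - {s}. p t * rate c la mu al t s))"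

definition fk :: "nat \<Rightarrow> real \<Rightarrow> real \<Rightarrow> real \<Rightarrow> nat \<Rightarrow> real \<Rightarrow> real" where
  "fk c la mu al k z = (la + real k * mu + (real c - real k) * al) * z - la * z^2 - real k * mu"

definition zk :: "nat \<Rightarrow> real \<Rightarrow> real \<Rightarrow> real \<Rightarrow> nat \<Rightarrow> real" where
  "zk c la mu al k =
     (la + real k * mu + (real c - real k) * al
       - sqrt ((la + real k * mu + (real c - real k) * al)^2 - 4 * real k * la * mu)) / (2 * la)"

definition zhat :: "nat \<Rightarrow> real \<Rightarrow> real \<Rightarrow> real \<Rightarrow> nat \<Rightarrow> real" where
  "zhat c la mu al k =
     (if k = 0 then (la + real c * al) / la
      else (la + real k * mu + (real c - real k) * al
       + sqrt ((la + real k * mu + (real c - real k) * al)^2 - 4 * real k * la * mu)) / (2 * la))"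

definition Pihat :: "nat \<Rightarrow> (nat \<times> nat \<Rightarrow> real) \<Rightarrow> nat \<Rightarrow> 'a::real_normed_field \<Rightarrow> 'a" where
  "Pihat c p k z = (\<Sum>n. of_real (p (k, c + n)) * z ^ (c + n - k))"

fun Acoef :: "nat \<Rightarrow> real \<Rightarrow> real \<Rightarrow> real \<Rightarrow> (nat \<times> nat \<Rightarrow> real) \<Rightarrow> nat \<Rightarrow> nat \<Rightarrow> real" where
  "Acoef c la mu al p 0 j = 0"
| "Acoef c la mu al p (Suc 0) j =
     (let A10 = real c * al * p (0, c - 1) * zhat c la mu al 0 / fk c la mu al 1 (zhat c la mu al 0) in
      if j = 0 then A10 else if j = 1 then p (1, c - 1) - A10 else 0)"
| "Acoef c la mu al p (Suc (Suc m)) j =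
     (let k = Suc (Suc m) in
      if j < k then
        (real c - real k + 1) * al * Acoef c la mu al p (Suc m) j * zhat c la mu al j
          / fk c la mu al k (zhat c la mu al j)
      else if j = k then
        - (real c - real k + 1) * al *
          (\<Sum>l<k. Acoef c la mu al p (Suc m) l * zhat c la mu al l / fk c la mu al k (zhat c la mu al l))
        + p (k, c - 1)
      else 0)"

text \<open>Backward recursion for (a^(i)_j, b^(i)_j): abrec ... i m = (a^(i)_{c-m}, b^(i)_{c-m}).\<close>
fun abrec :: "nat \<Rightarrow> real \<Rightarrow> real \<Rightarrow> real \<Rightarrow> (nat \<times> nat \<Rightarrow> real) \<Rightarrow> nat \<Rightarrow> nat \<Rightarrow> real \<times> real" where
  "abrec c la mu al p i 0 =
     ((real c - real i + 1) * al * Pihat c p (i - 1) (zk c la mu al i)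
        / (real i * mu * zk c la mu al i ^ (c - i)),
      la * zk c la mu al i / (real i * mu))"
| "abrec c la mu al p i (Suc m) =
     (let j = c - Suc m; (a', b') = abrec c la mu al p i m;
          d = la + real i * mu + (real j - real i) * al - real i * mu * b' in
      (((real j - real i + 1) * al * p (i - 1, j) + real i * mu * a') / d, la / d))"

definition acoef :: "nat \<Rightarrow> real \<Rightarrow> real \<Rightarrow> real \<Rightarrow> (nat \<times> nat \<Rightarrow> real) \<Rightarrow> nat \<Rightarrow> nat \<Rightarrow> real" where
  "acoef c la mu al p i j = fst (abrec c la mu al p i (c - j))"

definition bcoef :: "nat \<Rightarrow> real \<Rightarrow> real \<Rightarrow> real \<Rightarrow> (nat \<times> nat \<Rightarrow> real) \<Rightarrow> nat \<Rightarrow> nat \<Rightarrow> real" where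
  "bcoef c la mu al p i j = snd (abrec c la mu al p i (c - j))"

end

theory Submission
  imports Defs
begin


lemma root_facts:
  assumes la: "la > 0" and mu: "mu > 0" and al: "al > 0" and k1: "1 \<le> k" and kc: "k < c"
  shows "\<And>x. fk c la mu al k x = - la * (x - zk c la mu al k) * (x - zhat c la mu al k)"
    and "0 < zk c la mu al k" and "zk c la mu al k < 1" and "1 < zhat c la mu al k"
proof -
  define B where "B = la + real k * mu + (real c - real k) * al"
  define D where "D = B^2 - 4 * real k * la * mu"
  define s where "s = sqrt D"
  have ck: "real c - real k > 0" using kc by simp
  have B0: "B \<ge> la + real k * mu" using ck al unfolding B_def by (simp add: mult_pos_pos)
  have "D \<ge> (la - real k * mu)^2"
  proof -
    have "(la + real k * mu)^2 \<le> B^2" using B0 la mu by (intro power_mono) auto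
    thus ?thesis unfolding D_def by (simp add: power2_eq_square algebra_simps)
  qed
  hence D0: "D \<ge> 0" by (smt (verit) zero_le_power2)
  have ss: "s^2 = D" "s \<ge> 0" unfolding s_def using D0 by auto
  have z: "zk c la mu al k = (B - s) / (2*la)" unfolding zk_def B_def s_def D_def by simp
  have zh: "zhat c la mu al k = (B + s) / (2*la)" using k1 unfolding zhat_def B_def s_def D_def by simp
  have f: "fk c la mu al k x = B * x - la * x^2 - real k * mu" for x unfolding fk_def B_def by simp
  show fac: "fk c la mu al k x = - la * (x - zk c la mu al k) * (x - zhat c la mu al k)" for x
    unfolding f z zh using la ss(1) unfolding D_def
    apply (simp add: field_simps power2_eq_square)
    subgoal premises P using arg_cong[OF P(2), of "\<lambda>t. la*t"] by (simp add: algebra_simps)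
    done
  have f1: "fk c la mu al k 1 > 0" using f[of 1] ck al unfolding B_def by simp
  have le: "zk c la mu al k \<le> zhat c la mu al k" unfolding z zh using ss la by (simp add: divide_right_mono)
  have "(1 - zk c la mu al k) * (1 - zhat c la mu al k) < 0"
  proof -
    have "la * ((1 - zk c la mu al k) * (1 - zhat c la mu al k)) < 0"
      using f1 fac[of 1] by (simp add: mult.assoc)
    thus ?thesis using la by (simp add: mult_less_0_iff)
  qed
  then show z1: "zk c la mu al k < 1" and "1 < zhat c la mu al k" using le
    by (auto simp: mult_less_0_iff)
  have "fk c la mu al k 0 = - real k * mu" unfolding f by simp
  hence "la * (zk c la mu al k * zhat c la mu al k) > 0" using fac[of 0] k1 mu by (simp add: mult.assoc)
  hence "zk c la mu al k * zhat c la mu al k > 0" using la by (simp add: zero_less_mult_iff)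
  thus "0 < zk c la mu al k" using \<open>1 < zhat c la mu al k\<close> by (simp add: zero_less_mult_iff)
qed



lemma rate_nonneg: "la \<ge> 0 \<Longrightarrow> mu \<ge> 0 \<Longrightarrow> al \<ge> 0 \<Longrightarrow> rate c la mu al s t \<ge> 0"
  by (auto simp: rate_def Let_def split: prod.splits)

lemma balance_k:
  assumes st: "stationary c la mu al p" and k1: "1 \<le> k" and kc: "k < c" and kj: "k < j"
  shows "p (k,j) * (la + real (min (j-k) (c-k)) * al + real k * mu)
       = la * p (k,j-1) + real (min (j-k+1) (c-k+1)) * al * p (k-1,j) + real k * mu * p (k,j+1)"
proof -
  let ?S = "state_space c"
  have sS: "(k,j) \<in> ?S" using kc kj by (simp add: state_space_def)
  have bal: "p (k,j) * (\<Sum>\<^sub>\<infinity>t\<in>?S - {(k,j)}. rate c la mu al (k,j) t) =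
        (\<Sum>\<^sub>\<infinity>t\<in>?S - {(k,j)}. p t * rate c la mu al t (k,j))"
    using st sS unfolding stationary_def by blast
  define T where "T = {(k,j+1),(k+1,j),(k,j-1)}"
  have "(\<Sum>\<^sub>\<infinity>t\<in>?S - {(k,j)}. rate c la mu al (k,j) t) = (\<Sum>\<^sub>\<infinity>t\<in>T. rate c la mu al (k,j) t)"
  proof (rule infsum_cong_neutral)
    fix x assume "x \<in> T - (?S - {(k,j)})" thus "rate c la mu al (k,j) x = 0"
      using kc kj by (auto simp: T_def state_space_def)
  next
    fix x assume "x \<in> (?S - {(k,j)}) - T" thus "rate c la mu al (k,j) x = 0"
      using kc kj by (auto simp: T_def state_space_def rate_def Let_def split: prod.splits)
  qed simp
  also have "\<dots> = la + real (min (j-k) (c-k)) * al + real k * mu"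
    using kc kj k1 by (simp add: T_def rate_def Let_def) (use kj in arith)
  finally have o: "(\<Sum>\<^sub>\<infinity>t\<in>?S - {(k,j)}. rate c la mu al (k,j) t) = la + real (min (j-k) (c-k)) * al + real k * mu" .
  define T' where "T' = {(k,j-1),(k-1,j),(k,j+1)}"
  have "(\<Sum>\<^sub>\<infinity>t\<in>?S - {(k,j)}. p t * rate c la mu al t (k,j)) = (\<Sum>\<^sub>\<infinity>t\<in>T'. p t * rate c la mu al t (k,j))"
  proof (rule infsum_cong_neutral)
    fix x assume "x \<in> T' - (?S - {(k,j)})" thus "p x * rate c la mu al x (k,j) = 0"
      using kc kj k1 by (auto simp: T'_def state_space_def)
  next
    fix x assume "x \<in> (?S - {(k,j)}) - T'" thus "p x * rate c la mu al x (k,j) = 0"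
      using kc kj by (auto simp: T'_def state_space_def rate_def Let_def split: prod.splits)
  qed simp
  also have "\<dots> = la * p (k,j-1) + real (min (j-k+1) (c-k+1)) * al * p (k-1,j) + real k * mu * p (k,j+1)"
    using kc kj k1 by (simp add: T'_def rate_def Let_def Suc_diff_le) (use kj kc in arith)
  finally show ?thesis using bal o by simp
qed

lemma balance_0:
  assumes st: "stationary c la mu al p" and c1: "1 \<le> c" and j1: "1 \<le> j"
  shows "p (0,j) * (la + real (min j c) * al) = la * p (0,j-1)"
proof -
  let ?S = "state_space c"
  have sS: "(0,j) \<in> ?S" by (simp add: state_space_def)
  have bal: "p (0,j) * (\<Sum>\<^sub>\<infinity>t\<in>?S - {(0,j)}. rate c la mu al (0,j) t) =
        (\<Sum>\<^sub>\<infinity>t\<in>?S - {(0,j)}. p t * rate c la mu al t (0,j))"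
    using st sS unfolding stationary_def by blast
  define T where "T = {(0::nat,j+1),(1,j)}"
  have "(\<Sum>\<^sub>\<infinity>t\<in>?S - {(0,j)}. rate c la mu al (0,j) t) = (\<Sum>\<^sub>\<infinity>t\<in>T. rate c la mu al (0,j) t)"
  proof (rule infsum_cong_neutral)
    fix x assume "x \<in> T - (?S - {(0,j)})" thus "rate c la mu al (0,j) x = 0"
      using c1 j1 by (auto simp: T_def state_space_def)
  next
    fix x assume "x \<in> (?S - {(0,j)}) - T" thus "rate c la mu al (0,j) x = 0"
      using c1 j1 by (auto simp: T_def state_space_def rate_def Let_def split: prod.splits)
  qed simp
  also have "\<dots> = la + real (min j c) * al"
    using c1 j1 by (simp add: T_def rate_def Let_def)
  finally have o: "(\<Sum>\<^sub>\<infinity>t\<in>?S - {(0,j)}. rate c la mu al (0,j) t) = la + real (min j c) * al" .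
  define T' where "T' = {(0::nat,j-1)}"
  have "(\<Sum>\<^sub>\<infinity>t\<in>?S - {(0,j)}. p t * rate c la mu al t (0,j)) = (\<Sum>\<^sub>\<infinity>t\<in>T'. p t * rate c la mu al t (0,j))"
  proof (rule infsum_cong_neutral)
    fix x assume "x \<in> T' - (?S - {(0,j)})" thus "p x * rate c la mu al x (0,j) = 0"
      using j1 by (auto simp: T'_def state_space_def)
  next
    fix x assume "x \<in> (?S - {(0,j)}) - T'" thus "p x * rate c la mu al x (0,j) = 0"
      using j1 by (auto simp: T'_def state_space_def rate_def Let_def split: prod.splits)
  qed simp
  also have "\<dots> = la * p (0,j-1)"
    using j1 by (simp add: T'_def rate_def Let_def)
  finally show ?thesis using bal o by simp
qed

lemma rate_support: "rate c la mu al (a,b) (k,j) \<noteq> 0 \<Longrightarrow> a \<le> Suc k \<and> b \<le> Suc j"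
  by (auto simp: rate_def split: if_splits)

lemma pred_zero:
  assumes st: "stationary c la mu al p" and la: "la \<ge> 0" and mu: "mu \<ge> 0" and al: "al \<ge> 0"
    and sS: "s \<in> state_space c" and tS: "t \<in> state_space c" and ts: "t \<noteq> s"
    and ps: "p s = 0" and r: "rate c la mu al t s > 0"
  shows "p t = 0"
proof -
  let ?S = "state_space c"
  let ?g = "\<lambda>t. p t * rate c la mu al t s"
  have bal: "p s * (\<Sum>\<^sub>\<infinity>t\<in>?S - {s}. rate c la mu al s t) = (\<Sum>\<^sub>\<infinity>t\<in>?S - {s}. ?g t)"
    using st sS unfolding stationary_def by blast
  define N where "N = {..fst s + 1} \<times> {..snd s + 1}"
  have "(\<Sum>\<^sub>\<infinity>t\<in>?S - {s}. ?g t) = (\<Sum>\<^sub>\<infinity>t\<in>(?S - {s}) \<inter> N. ?g t)"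
  proof (rule infsum_cong_neutral)
    fix x assume "x \<in> (?S - {s}) - ((?S - {s}) \<inter> N)" hence "x \<notin> N" by blast
    hence "\<not> (fst x \<le> Suc (fst s) \<and> snd x \<le> Suc (snd s))" by (simp add: N_def mem_Times_iff)
    hence "\<not> rate c la mu al (fst x, snd x) (fst s, snd s) \<noteq> 0" using rate_support by blast
    hence "rate c la mu al x s = 0" by simp
    thus "?g x = 0" by simp
  qed blast+
  also have "\<dots> = (\<Sum>t\<in>(?S - {s}) \<inter> N. ?g t)" by (rule infsum_finite) (simp add: N_def)
  finally have e: "(\<Sum>t\<in>(?S - {s}) \<inter> N. ?g t) = 0" using bal ps by simp
  have nn: "\<forall>x\<in>(?S - {s}) \<inter> N. ?g x \<ge> 0"
  proof
    fix x assume "x \<in> (?S - {s}) \<inter> N"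
    hence "x \<in> ?S" by blast
    hence "p x \<ge> 0" using st unfolding stationary_def by blast
    thus "?g x \<ge> 0" using rate_nonneg[OF la mu al] by simp
  qed
  have "rate c la mu al (fst t, snd t) (fst s, snd s) \<noteq> 0" using r by simp
  hence "fst t \<le> Suc (fst s) \<and> snd t \<le> Suc (snd s)" by (rule rate_support)
  hence tN: "t \<in> N" by (simp add: N_def mem_Times_iff)
  have fin: "finite ((?S - {s}) \<inter> N)" by (simp add: N_def)
  have all0: "\<forall>x\<in>(?S - {s}) \<inter> N. ?g x = 0" by (rule iffD1[OF sum_nonneg_eq_0_iff[OF fin bspec[OF nn]] e])
  have "t \<in> (?S - {s}) \<inter> N" using tS ts tN by blast
  hence "?g t = 0" using all0 by blast
  thus ?thesis using r by simp
qed



lemma rate_la: "rate c la mu al (k,j) (k,Suc j) = la" by (simp add: rate_def)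
lemma rate_al: "k < c \<Longrightarrow> k < j \<Longrightarrow> rate c la mu al (k,j) (Suc k,j) = real (min (j-k) (c-k)) * al"
  by (simp add: rate_def)
lemma rate_mu: "1 \<le> k \<Longrightarrow> k \<le> j \<Longrightarrow> rate c la mu al (k,Suc j) (k,j) = real k * mu"
  by (simp add: rate_def)
lemma rate_diag: "rate c la mu al (Suc m,Suc m) (m,m) = real (Suc m) * mu"
  by (simp add: rate_def)

lemma not_all_zero_row:
  assumes st: "stationary c la mu al p" and la: "la > 0" and mu: "mu > 0" and al: "al > 0"
    and r1: "1 \<le> r" and rc: "r < c" and z: "\<forall>j\<ge>c. p (r,j) = 0"
  shows False
proof -
  let ?S = "state_space c"
  have pz: "p t = 0" if "s \<in> ?S" "t \<in> ?S" "t \<noteq> s" "p s = 0" "rate c la mu al t s > 0" for s t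
    using pred_zero[OF st _ _ _ that] la mu al by simp
  have down: "p (k,j) = 0" if "p (k, Suc j) = 0" "k \<le> j" "k \<le> c" for k j
    using pz[of "(k,Suc j)" "(k,j)"] that la by (simp add: state_space_def rate_la)
  define Z where "Z m \<longleftrightarrow> (\<forall>j\<ge>m. p (m,j) = 0)" for m
  have "\<forall>j\<ge>max r (c - n). p (r,j) = 0" for n
  proof (induction n)
    case 0 thus ?case using z by simp
  next
    case (Suc n)
    show ?case
    proof (intro allI impI)
      fix j assume j: "max r (c - Suc n) \<le> j"
      show "p (r,j) = 0"
      proof (cases "max r (c - n) \<le> j")
        case True thus ?thesis using Suc by blast
      next
        case False
        hence "j = c - Suc n" "c - n = Suc j" "r \<le> j" using j by auto
        thus ?thesis using Suc down[of r j] rc by simp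
      qed
    qed
  qed
  from this[of c] have Zr: "Z r" by (simp add: Z_def)
  have Zdown: "Z (m - 1)" if Zm: "Z m" and m1: "1 \<le> m" and mc: "m \<le> c" for m
  proof -
    have a: "p (m-1, j) = 0" if j: "j \<ge> m" for j
    proof (rule pz[of "(m,j)"])
      show "rate c la mu al (m - 1, j) (m, j) > 0"
        using rate_al[of "m-1" c j la mu al] \<open>1 \<le> m\<close> \<open>m \<le> c\<close> j al by simp
    qed (use Zm m1 mc j in \<open>auto simp: state_space_def Z_def\<close>)
    have "p (m-1, m-1) = 0" using down[of "m-1" "m-1"] a[of m] m1 mc by simp
    show ?thesis unfolding Z_def
    proof (intro allI impI)
      fix j assume "m - 1 \<le> j"
      hence "j = m - 1 \<or> m \<le> j" using m1 by linarith
      thus "p (m - 1, j) = 0" using a \<open>p (m-1, m-1) = 0\<close> by blast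
    qed
  qed
  have Zlow: "Z (r - n)" for n
  proof (induction n)
    case 0 thus ?case using Zr by simp
  next
    case (Suc n) show ?case
    proof (cases "r - n = 0")
      case True thus ?thesis using Suc by simp
    next
      case False
      hence "Z (r - n - 1)" using Zdown[of "r-n"] Suc rc by simp
      thus ?thesis by (simp add: diff_diff_add)
    qed
  qed
  have Zup: "Z (Suc m)" if "Z m" "m < c" for m
  proof -
    have d: "p (Suc m, Suc m) = 0"
      by (rule pz[of "(m,m)"]) (use that mu in \<open>auto simp: state_space_def Z_def rate_diag\<close>)
    have "p (Suc m, Suc m + n) = 0" for n
    proof (induction n)
      case 0 thus ?case using d by simp
    next
      case (Suc n) show ?case
        by (rule pz[of "(Suc m, Suc m + n)"]) (use Suc that mu in \<open>auto simp: state_space_def rate_mu\<close>)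
    qed
    hence h: "\<And>n. p (Suc m, Suc m + n) = 0" .
    show ?thesis unfolding Z_def
    proof (intro allI impI)
      fix j assume "Suc m \<le> j"
      thus "p (Suc m, j) = 0" using h[of "j - Suc m"] by simp
    qed
  qed
  have Z0: "Z 0" using Zlow[of r] by simp
  have Zall: "Z m" if "m \<le> c" for m using that
  proof (induction m)
    case 0 thus ?case using Z0 by simp
  next
    case (Suc m) thus ?case using Zup by simp
  qed
  have "\<forall>s\<in>?S. p s = 0" using Zall by (auto simp: state_space_def Z_def)
  hence "(p has_sum 0) ?S" by (intro has_sum_0) auto
  moreover have "(p has_sum 1) ?S" using st by (simp add: stationary_def)
  ultimately show False using has_sum_unique by fastforce
qed



lemma row_summable:
  assumes st: "stationary c la mu al p" and kc: "k \<le> c"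
  shows "summable (\<lambda>n. p (k, c+n))" and "\<And>n. p (k, c+n) \<ge> 0"
proof -
  let ?S = "state_space c"
  let ?h = "\<lambda>n::nat. (k, c+n)"
  have ps: "p summable_on ?S" using st unfolding stationary_def by (auto simp: summable_on_def)
  have sub: "range ?h \<subseteq> ?S" using kc by (auto simp: state_space_def)
  have "p summable_on range ?h" by (rule summable_on_subset_banach[OF ps sub])
  hence "(p \<circ> ?h) summable_on UNIV" by (subst summable_on_reindex[symmetric]) (auto simp: inj_on_def)
  moreover show nn: "p (k, c+n) \<ge> 0" for n using st sub unfolding stationary_def by blast
  ultimately show "summable (\<lambda>n. p (k, c+n))"
    using summable_on_UNIV_nonneg_real_iff[of "\<lambda>n. p (k, c+n)"] nn by (simp add: o_def)
qed

lemma Pihat_summable: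
  fixes z :: "'a::{real_normed_field,banach}"
  assumes st: "stationary c la mu al p" and kc: "k \<le> c" and z: "norm z \<le> 1"
  shows "summable (\<lambda>n. of_real (p (k, c+n)) * z ^ (c+n-m))"
proof (rule summable_comparison_test'[OF row_summable(1)[OF st kc]])
  fix n
  have "norm (of_real (p (k, c+n)) * z ^ (c+n-m)) = p (k,c+n) * norm z ^ (c+n-m)"
    using row_summable(2)[OF st kc, of n] by (simp add: norm_mult norm_power)
  also have "\<dots> \<le> p (k,c+n) * 1"
    using row_summable(2)[OF st kc, of n] z by (intro mult_left_mono power_le_one) auto
  finally show "norm (of_real (p (k, c+n)) * z ^ (c+n-m)) \<le> p (k, c+n)" by simp
qed

lemma gen_identity:
  fixes z :: "'a::{real_normed_field,banach}"
  assumes st: "stationary c la mu al p" and k1: "1 \<le> k" and kc: "k < c" and z: "norm z \<le> 1"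
  shows "(of_real (la + real k * mu + (real c - real k) * al) * z - of_real la * z^2 - of_real (real k * mu)) * Pihat c p k z
     = of_real (la * p (k,c-1)) * z^(c-k+1) + of_real ((real c - real k + 1) * al) * Pihat c p (k-1) z
       - of_real (real k * mu * p (k,c)) * z^(c-k)"
proof -
  define B where "B = la + real k * mu + (real c - real k) * al"
  define q where "q = (real c - real k + 1) * al"
  define u where "u n = of_real (p (k, c+n)) * z ^ (c+n-k)" for n
  define v where "v n = of_real (p (k, c+n-1)) * z ^ (c+n-k+1)" for n
  define w where "w n = of_real (p (k-1, c+n)) * z ^ (c+n-(k-1))" for n
  have su: "summable u" unfolding u_def by (rule Pihat_summable[OF st _ z]) (use kc in simp)
  have sw: "summable w" unfolding w_def by (rule Pihat_summable[OF st _ z]) (use kc in simp)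
  have Pk: "Pihat c p k z = suminf u" unfolding Pihat_def u_def ..
  have Pk1: "Pihat c p (k-1) z = suminf w" unfolding Pihat_def w_def ..
  have vS: "v (Suc n) = z^2 * u n" for n
  proof -
    have "c + Suc n - k + 1 = (c + n - k) + 2" using kc by simp
    thus ?thesis unfolding v_def u_def by (simp add: power_add power2_eq_square algebra_simps)
  qed
  have v0: "v 0 = of_real (p (k,c-1)) * z^(c-k+1)" unfolding v_def by simp
  have u0: "u 0 = of_real (p (k,c)) * z^(c-k)" unfolding u_def by simp
  have "(\<lambda>n. v (Suc n)) sums (z^2 * suminf u)" unfolding vS by (rule sums_mult[OF summable_sums[OF su]])
  hence sv: "v sums (z^2 * suminf u + v 0)" by (simp add: sums_Suc_iff)
  have "(\<lambda>n. u (Suc n)) sums (suminf u - u 0)"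
    using summable_sums[OF su] by (simp add: sums_Suc_iff)
  hence suS: "(\<lambda>n. u (Suc n)) sums (suminf u - u 0)" .
  have trm: "of_real B * (z * u n) = of_real la * v n + of_real q * w n + of_real (real k * mu) * u (Suc n)" for n
  proof -
    have bal: "p (k,c+n) * (la + real (min (c+n-k) (c-k)) * al + real k * mu)
       = la * p (k,c+n-1) + real (min (c+n-k+1) (c-k+1)) * al * p (k-1,c+n) + real k * mu * p (k,c+n+1)"
      using balance_k[OF st k1 kc, of "c+n"] kc by simp
    have m1: "min (c+n-k) (c-k) = c - k" by simp
    have m2: "min (c+n-k+1) (c-k+1) = c - k + 1" by simp
    have r1: "real (c-k) = real c - real k" using kc by simp
    have r2: "real (c-k+1) = real c - real k + 1" using kc by simp
    have balr: "p (k,c+n) * B = la * p (k,c+n-1) + q * p (k-1,c+n) + real k * mu * p (k,c+n+1)"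
      using bal unfolding m1 m2 r1 r2 B_def q_def by (simp add: algebra_simps)
    have e1: "c + n - (k - 1) = c + n - k + 1" using k1 kc by simp
    have e2: "c + Suc n - k = c + n - k + 1" using kc by simp
    have "of_real B * (z * u n) = of_real (p (k,c+n) * B) * z^(c+n-k+1)"
      unfolding u_def by (simp add: algebra_simps)
    also have "\<dots> = of_real (la * p (k,c+n-1) + q * p (k-1,c+n) + real k * mu * p (k,c+n+1)) * z^(c+n-k+1)"
      using balr by simp
    also have "\<dots> = of_real la * v n + of_real q * w n + of_real (real k * mu) * u (Suc n)"
      unfolding v_def w_def u_def e1 e2 by (simp add: algebra_simps)
    finally show ?thesis .
  qed
  have s1: "(\<lambda>n. of_real B * (z * u n)) sums (of_real B * (z * suminf u))"
    by (intro sums_mult summable_sums su)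
  have s2: "(\<lambda>n. of_real la * v n + of_real q * w n + of_real (real k * mu) * u (Suc n)) sums
     (of_real la * (z^2 * suminf u + v 0) + of_real q * suminf w + of_real (real k * mu) * (suminf u - u 0))"
    by (intro sums_add sums_mult sv summable_sums sw suS)
  have eq: "of_real B * (z * suminf u) = of_real la * (z^2 * suminf u + v 0) + of_real q * suminf w + of_real (real k * mu) * (suminf u - u 0)"
    using sums_unique2[OF s1 s2[folded trm]] .
  show ?thesis unfolding Pk Pk1 B_def[symmetric] q_def[symmetric]
    using eq unfolding v0 u0 by (simp add: algebra_simps)
qed



lemma Pihat_pos:
  assumes st: "stationary c la mu al p" and la: "la > 0" and mu: "mu > 0" and al: "al > 0"
    and r1: "1 \<le> r" and rc: "r < c" and x0: "0 < x" and x1: "x \<le> (1::real)"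
  shows "Pihat c p r x > 0"
proof -
  have nn: "\<And>n. p (r, c+n) \<ge> 0" using row_summable(2)[OF st] rc by simp
  obtain n where pn: "p (r, c+n) > 0"
  proof (rule ccontr)
    assume "\<not> thesis"
    hence "\<forall>n. \<not> p (r, c+n) > 0" using that by blast
    hence "\<forall>j\<ge>c. p (r,j) = 0" using nn by (metis le_Suc_ex linorder_not_le order_antisym_conv)
    thus False using not_all_zero_row[OF st la mu al r1 rc] by blast
  qed
  have "0 < (\<Sum>n. p (r, c+n) * x ^ (c+n-r))"
  proof (rule suminf_pos2)
    show "summable (\<lambda>n. p (r, c+n) * x ^ (c+n-r))"
      using Pihat_summable[OF st _ , of r x r] rc x0 x1 by simp
    show "0 \<le> p (r, c+n) * x ^ (c+n-r)" for n using nn x0 by simp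
    show "0 < p (r, c+n) * x ^ (c+n-r)" using pn x0 by simp
  qed
  thus ?thesis unfolding Pihat_def by simp
qed

lemma ab_props:
  assumes st: "stationary c la mu al p" and la: "la > 0" and mu: "mu > 0" and al: "al > 0"
    and i2: "2 \<le> i" and ic: "i < c" and m: "m < c - i"
  shows "fst (abrec c la mu al p i m) > 0 \<and> 0 < snd (abrec c la mu al p i m)
       \<and> snd (abrec c la mu al p i m) < la / (real i * mu)
       \<and> p (i, c-m) = fst (abrec c la mu al p i m) + snd (abrec c la mu al p i m) * p (i, c-m-1)"
  using m
proof (induction m)
  case 0
  have i1: "1 \<le> i" using i2 by simp
  define z where "z = zk c la mu al i"
  have z0: "0 < z" and z1: "z < 1" using root_facts[OF la mu al i1 ic] unfolding z_def by auto
  have fz: "fk c la mu al i z = 0" using root_facts(1)[OF la mu al i1 ic, of z] unfolding z_def by simp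
  have gi: "(la + real i * mu + (real c - real i) * al) * z - la * z^2 - real i * mu = fk c la mu al i z"
    unfolding fk_def by simp
  have G: "0 = la * p (i,c-1) * z^(c-i+1) + ((real c - real i + 1) * al) * Pihat c p (i-1) z
       - real i * mu * p (i,c) * z^(c-i)"
  proof -
    have G0: "((la + real i * mu + (real c - real i) * al) * z - la * z^2 - real i * mu) * Pihat c p i z
      = la * p (i,c-1) * z^(c-i+1) + ((real c - real i + 1) * al) * Pihat c p (i-1) z
       - real i * mu * p (i,c) * z^(c-i)"
      using gen_identity[OF st i1 ic, of z] z0 z1 by simp
    show ?thesis using G0 unfolding gi fz by simp
  qed
  have Ppos: "Pihat c p (i-1) z > 0" using Pihat_pos[OF st la mu al, of "i-1" z] i2 ic z0 z1 by simp
  have zp: "z^(c-i) > 0" using z0 by simp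
  have imu: "real i * mu > 0" using i1 mu by simp
  let ?a = "(real c - real i + 1) * al * Pihat c p (i - 1) z / (real i * mu * z ^ (c - i))"
  let ?b = "la * z / (real i * mu)"
  have ab: "abrec c la mu al p i 0 = (?a, ?b)" unfolding z_def by simp
  have ci: "real c - real i + 1 > 0" using ic by simp
  have "?a > 0" by (intro divide_pos_pos mult_pos_pos ci al Ppos imu zp)
  moreover have "?b > 0" using la z0 imu by simp
  moreover have "?b < la / (real i * mu)" using la z1 imu by (simp add: divide_strict_right_mono)
  moreover have "p (i,c) = ?a + ?b * p (i, c-1)"
  proof -
    define Z where "Z = z^(c-i)"
    define P where "P = Pihat c p (i - 1) z"
    define q where "q = (real c - real i + 1) * al"
    have G': "real i * mu * p (i,c) * Z = la * p (i,c-1) * z * Z + q * P"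
      using G unfolding Z_def P_def q_def by (simp add: algebra_simps)
    have Z0: "Z > 0" unfolding Z_def using zp .
    have "p (i,c) = (la * p (i,c-1) * z * Z + q * P) / (real i * mu * Z)"
      using G' Z0 imu mu i1 by (simp add: eq_divide_eq mult.commute mult.left_commute)
    also have "\<dots> = q * P / (real i * mu * Z) + la * z / (real i * mu) * p (i, c-1)"
      using Z0 imu by (simp add: add_divide_distrib)
    finally show ?thesis unfolding Z_def P_def q_def by (simp add: mult.assoc)
  qed
  ultimately show ?case unfolding ab by simp
next
  case (Suc m)
  have i1: "1 \<le> i" using i2 by simp
  obtain a' b' where ab': "abrec c la mu al p i m = (a', b')" by fastforce
  have IH: "a' > 0" "0 < b'" "b' < la / (real i * mu)" "p (i, c-m) = a' + b' * p (i, c-m-1)"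
    using Suc ab' by auto
  define j where "j = c - Suc m"
  have jc: "j < c" and ij: "i < j" and cm: "c - m = Suc j" using Suc.prems unfolding j_def by auto
  define d where "d = la + real i * mu + (real j - real i) * al - real i * mu * b'"
  have imu: "real i * mu > 0" using i1 mu by simp
  have "real i * mu * b' < la" using IH(3) imu by (simp add: field_simps)
  hence dgt: "d > real i * mu" unfolding d_def using ij al by (smt (verit) of_nat_less_iff mult_pos_pos)
  hence d0: "d > 0" using imu by simp
  have ab: "abrec c la mu al p i (Suc m) = (((real j - real i + 1) * al * p (i - 1, j) + real i * mu * a') / d, la / d)"
    unfolding j_def[symmetric] by (simp add: ab' d_def j_def Let_def)
  have "(i-1,j) \<in> state_space c" using jc ij by (auto simp: state_space_def)
  hence pn: "p (i-1,j) \<ge> 0" using st unfolding stationary_def by blast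
  have bal: "p (i,j) * (la + real (min (j-i) (c-i)) * al + real i * mu)
       = la * p (i,j-1) + real (min (j-i+1) (c-i+1)) * al * p (i-1,j) + real i * mu * p (i,j+1)"
    using balance_k[OF st i1 ic ij] .
  have m1: "min (j-i) (c-i) = j - i" "min (j-i+1) (c-i+1) = j-i+1" using jc by auto
  have r1: "real (j-i) = real j - real i" "real (j-i+1) = real j - real i + 1" using ij by auto
  have bal2: "p (i,j) * (la + (real j - real i) * al + real i * mu)
       = la * p (i,j-1) + (real j - real i + 1) * al * p (i-1,j) + real i * mu * (a' + b' * p (i,j))"
    using bal IH(4) unfolding m1 r1 cm by simp
  have "p (i,j) * d = la * p (i,j-1) + (real j - real i + 1) * al * p (i-1,j) + real i * mu * a'"
    using bal2 unfolding d_def by (simp add: algebra_simps)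
  hence peq: "p (i,j) = ((real j - real i + 1) * al * p (i - 1, j) + real i * mu * a') / d + la / d * p (i, j-1)"
    using d0 by (simp add: field_simps)
  have "((real j - real i + 1) * al * p (i - 1, j) + real i * mu * a') / d > 0"
    using d0 IH(1) imu pn ij al mu i1 by (intro divide_pos_pos add_nonneg_pos mult_nonneg_nonneg mult_pos_pos) auto
  moreover have "la / d < la / (real i * mu)" using dgt imu la by (simp add: divide_strict_left_mono)
  ultimately show ?case unfolding ab using peq la d0 cm by (simp add: j_def)
qed



definition Ap :: "nat \<Rightarrow> real \<Rightarrow> real \<Rightarrow> real \<Rightarrow> (nat \<times> nat \<Rightarrow> real) \<Rightarrow> nat \<Rightarrow> nat \<Rightarrow> real" where
  "Ap c la mu al p k j = (if k = 0 then (if j = 0 then p (0, c-1) else 0) else Acoef c la mu al p k j)"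

lemma Ap_rec:
  assumes "1 \<le> k"
  shows "Ap c la mu al p k j =
    (if j < k then (real c - real k + 1) * al * Ap c la mu al p (k-1) j * zhat c la mu al j / fk c la mu al k (zhat c la mu al j)
     else if j = k then - (real c - real k + 1) * al *
          (\<Sum>l<k. Ap c la mu al p (k-1) l * zhat c la mu al l / fk c la mu al k (zhat c la mu al l)) + p (k, c-1)
     else 0)"
proof (cases k)
  case 0 thus ?thesis using assms by simp
next
  case (Suc m)
  show ?thesis
  proof (cases m)
    case 0 thus ?thesis using Suc by (simp add: Ap_def Let_def)
  next
    case (Suc m') thus ?thesis using \<open>k = Suc m\<close> by (simp add: Ap_def Let_def)
  qed
qed

lemma Ap_sum:
  assumes "1 \<le> k"
  shows "(\<Sum>j\<le>k. Ap c la mu al p k j) = p (k, c-1)"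
proof -
  have 0: "(\<Sum>j\<le>k. Ap c la mu al p k j) = (\<Sum>j<k. Ap c la mu al p k j) + Ap c la mu al p k k"
    by (simp add: lessThan_Suc_atMost[symmetric])
  define Q where "Q = (real c - real k + 1) * al"
  define X where "X = (\<Sum>l<k. Ap c la mu al p (k-1) l * zhat c la mu al l / fk c la mu al k (zhat c la mu al l))"
  have "(\<Sum>j<k. Ap c la mu al p k j) = (\<Sum>j<k. Q * (Ap c la mu al p (k-1) j * zhat c la mu al j / fk c la mu al k (zhat c la mu al j)))"
    by (rule sum.cong) (use Ap_rec[OF assms] in \<open>auto simp: Q_def\<close>)
  also have "\<dots> = Q * X" unfolding X_def by (simp add: sum_distrib_left)
  finally have 1: "(\<Sum>j<k. Ap c la mu al p k j) = Q * X" .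
  have 2: "Ap c la mu al p k k = - (Q * X) + p (k, c-1)"
    using Ap_rec[OF assms, of c la mu al p k] unfolding Q_def X_def by (simp add: algebra_simps)
  show ?thesis using 0 1 2 by simp
qed

lemma zhat_gt1:
  assumes la: "la > 0" and mu: "mu > 0" and al: "al > 0" and jc: "j < c"
  shows "zhat c la mu al j > 1"
proof (cases "j = 0")
  case True
  have "(la + real c * al) / la > 1" using la al jc by (simp add: field_simps)
  thus ?thesis using True by (simp add: zhat_def)
next
  case False thus ?thesis using root_facts(4)[OF la mu al _ jc] by simp
qed

lemma Pihat_base:
  fixes z :: complex
  assumes st: "stationary c la mu al p" and la: "la > 0" and al: "al > 0" and c1: "1 \<le> c" and z: "norm z \<le> 1"
  shows "Pihat c p 0 z = z^c * (complex_of_real (p (0, c-1)) / (complex_of_real (zhat c la mu al 0) - z))"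
proof -
  define r where "r = la / (la + real c * al)"
  have lt: "la < la + real c * al" using al c1 by simp
  have dn: "la + al * real c \<noteq> 0" "la + real c * al \<noteq> 0" using lt la by (auto simp: mult.commute)
  have r0: "r > 0" unfolding r_def using la lt by simp
  have r1: "r < 1" unfolding r_def using la lt by simp
  have rec: "p (0, c+n) = p (0, c-1) * r^(n+1)" for n
  proof (induction n)
    case 0
    have "p (0,c) * (la + real (min c c) * al) = la * p (0,c-1)" using balance_0[OF st c1 c1] .
    thus ?case using la al dn unfolding r_def by (simp add: field_simps)
  next
    case (Suc n)
    have "p (0,c+Suc n) * (la + real (min (c + Suc n) c) * al) = la * p (0,c+Suc n-1)"
      using balance_0[OF st c1, of "c + Suc n"] by simp
    hence "p (0,c+Suc n) * (la + real c * al) = la * p (0,c+n)" by simp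
    hence "p (0,c+Suc n) = r * p (0,c+n)" using la al dn unfolding r_def by (simp add: field_simps)
    thus ?case using Suc by simp
  qed
  have nr: "norm (complex_of_real r * z) < 1"
    using r0 r1 z by (simp add: norm_mult) (smt (verit) mult_left_le mult_nonneg_nonneg norm_ge_zero)
  have "(\<lambda>n. (complex_of_real (p (0,c-1) * r) * z^c) * (complex_of_real r * z)^n) sums
        ((complex_of_real (p (0,c-1) * r) * z^c) * (1 / (1 - complex_of_real r * z)))"
    by (intro sums_mult geometric_sums nr)
  moreover have "(\<lambda>n. (complex_of_real (p (0,c-1) * r) * z^c) * (complex_of_real r * z)^n)
      = (\<lambda>n. of_real (p (0, c+n)) * z ^ (c+n-0))"
    unfolding rec by (auto simp: power_add power_mult_distrib algebra_simps)
  ultimately have "Pihat c p 0 z = (complex_of_real (p (0,c-1) * r) * z^c) * (1 / (1 - complex_of_real r * z))"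
    unfolding Pihat_def by (simp add: sums_unique[symmetric])
  also have "\<dots> = z^c * (complex_of_real (p (0, c-1)) / (complex_of_real (zhat c la mu al 0) - z))"
  proof -
    have zh: "zhat c la mu al 0 = 1 / r" unfolding zhat_def r_def by simp
    have ne: "1 - complex_of_real r * z \<noteq> 0" using nr by auto
    have ne2: "complex_of_real (1/r) - z \<noteq> 0"
    proof
      assume "complex_of_real (1/r) - z = 0"
      hence "complex_of_real r * z = 1" using r0 by (simp add: field_simps)
      thus False using nr by simp
    qed
    show ?thesis unfolding zh using ne ne2 r0 by (simp add: field_simps)
  qed
  finally show ?thesis .
qed

lemma Pihat_cont:
  assumes st: "stationary c la mu al p" and kc: "k \<le> c"
  shows "continuous_on (cball 0 1) (\<lambda>z::complex. Pihat c p k z)"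
proof -
  have ul: "uniform_limit (cball 0 1) (\<lambda>n z. \<Sum>i<n. complex_of_real (p (k, c+i)) * z ^ (c+i-k))
            (\<lambda>z. suminf (\<lambda>i. complex_of_real (p (k, c+i)) * z ^ (c+i-k))) sequentially"
  proof (rule Weierstrass_m_test)
    show "summable (\<lambda>n. p (k, c+n))" by (rule row_summable(1)[OF st kc])
    fix n and z :: complex assume "z \<in> cball 0 1"
    hence z: "norm z \<le> 1" by simp
    have "norm (complex_of_real (p (k, c+n)) * z ^ (c+n-k)) = p (k,c+n) * norm z ^ (c+n-k)"
      using row_summable(2)[OF st kc, of n] by (simp add: norm_mult norm_power)
    also have "\<dots> \<le> p (k,c+n) * 1"
      using row_summable(2)[OF st kc, of n] z by (intro mult_left_mono power_le_one) auto
    finally show "norm (complex_of_real (p (k, c+n)) * z ^ (c+n-k)) \<le> p (k, c+n)" by simp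
  qed
  have "continuous_on (cball 0 1) (\<lambda>z. suminf (\<lambda>i. complex_of_real (p (k, c+i)) * z ^ (c+i-k)))"
    by (rule uniform_limit_theorem[OF _ ul]) (auto intro!: always_eventually continuous_intros)
  thus ?thesis unfolding Pihat_def .
qed

lemma pf_step:
  fixes z B la kmu q P :: complex and w A A' :: "nat \<Rightarrow> complex"
  assumes wz: "\<forall>j\<le>k. w j \<noteq> z"
    and hA: "\<forall>j<k. A j * (B * w j - la * (w j)^2 - kmu) = q * A' j * w j"
    and hk: "B * w k - la * (w k)^2 - kmu = 0"
    and hs: "(\<Sum>j\<le>k. A j) = P"
  shows "(B*z - la*z^2 - kmu) * (\<Sum>j\<le>k. A j / (w j - z)) - q * z * (\<Sum>j<k. A' j / (w j - z)) - la * P * z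
       = (\<Sum>j\<le>k. A j * (la * w j - B)) + q * (\<Sum>j<k. A' j)"
proof -
  have t1: "(B*z - la*z^2 - kmu) * (A j / (w j - z)) - q * z * (A' j / (w j - z))
        = A j * (la * (z + w j) - B) + q * A' j" if j: "j < k" for j
  proof -
    have ne: "w j - z \<noteq> 0" using wz j by auto
    have e: "(B*z - la*z^2 - kmu) = (B * w j - la * (w j)^2 - kmu) + (z - w j) * (B - la * (z + w j))"
      by (simp add: algebra_simps power2_eq_square)
    have "(B*z - la*z^2 - kmu) * A j = A j * (B * w j - la * (w j)^2 - kmu) + (z - w j) * (B - la * (z + w j)) * A j"
      unfolding e by (simp add: algebra_simps)
    also have "A j * (B * w j - la * (w j)^2 - kmu) = q * A' j * w j" using hA j by blast
    finally have fa: "(B*z - la*z^2 - kmu) * A j = q * A' j * w j + (z - w j) * (B - la * (z + w j)) * A j" .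
    have "(B*z - la*z^2 - kmu) * (A j / (w j - z)) - q * z * (A' j / (w j - z))
        = ((B*z - la*z^2 - kmu) * A j - q * z * A' j) / (w j - z)"
      by (simp add: diff_divide_distrib)
    also have "(B*z - la*z^2 - kmu) * A j - q * z * A' j = (w j - z) * (A j * (la * (z + w j) - B) + q * A' j)"
      unfolding fa by (simp add: algebra_simps)
    also have "(w j - z) * (A j * (la * (z + w j) - B) + q * A' j) / (w j - z) = A j * (la * (z + w j) - B) + q * A' j"
      using ne by simp
    finally show ?thesis .
  qed
  have t2: "(B*z - la*z^2 - kmu) * (A k / (w k - z)) = A k * (la * (z + w k) - B)"
  proof -
    have ne: "w k - z \<noteq> 0" using wz by auto
    have "(B*z - la*z^2 - kmu) = (B * w k - la * (w k)^2 - kmu) + (z - w k) * (B - la * (z + w k))"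
      by (simp add: algebra_simps power2_eq_square)
    hence fa: "(B*z - la*z^2 - kmu) = (z - w k) * (B - la * (z + w k))" using hk by simp
    have m: "(B*z - la*z^2 - kmu) * A k = (w k - z) * (A k * (la * (z + w k) - B))"
      unfolding fa by (simp add: algebra_simps)
    have "(B*z - la*z^2 - kmu) * (A k / (w k - z)) = ((B*z - la*z^2 - kmu) * A k) / (w k - z)" by simp
    thus ?thesis unfolding m using nonzero_mult_div_cancel_left[OF ne] by simp
  qed
  have "(B*z - la*z^2 - kmu) * (\<Sum>j\<le>k. A j / (w j - z)) - q * z * (\<Sum>j<k. A' j / (w j - z))
     = (\<Sum>j<k. (B*z - la*z^2 - kmu) * (A j / (w j - z)) - q * z * (A' j / (w j - z)))
       + (B*z - la*z^2 - kmu) * (A k / (w k - z))"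
  proof -
    define F where "F = B*z - la*z^2 - kmu"
    have s1: "(\<Sum>j\<le>k. A j / (w j - z)) = (\<Sum>j<k. A j / (w j - z)) + A k / (w k - z)"
      by (simp add: lessThan_Suc_atMost[symmetric])
    show ?thesis unfolding F_def[symmetric] s1
      by (simp only: distrib_left sum_distrib_left sum_subtractf) (simp add: algebra_simps)
  qed
  also have "\<dots> = (\<Sum>j<k. A j * (la * (z + w j) - B) + q * A' j) + A k * (la * (z + w k) - B)"
    using t1 t2 by simp
  also have "\<dots> = la * z * (\<Sum>j\<le>k. A j) + ((\<Sum>j\<le>k. A j * (la * w j - B)) + q * (\<Sum>j<k. A' j))"
  proof -
    have c1: "(\<Sum>j<k. A j * (la * (z + w j) - B) + q * A' j) = (\<Sum>j<k. la * z * A j + A j * (la * w j - B) + q * A' j)"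
      by (rule sum.cong) (simp_all add: algebra_simps)
    have c2: "(\<Sum>j<k. la * z * A j + A j * (la * w j - B) + q * A' j) = la * z * (\<Sum>j<k. A j) + (\<Sum>j<k. A j * (la * w j - B)) + q * (\<Sum>j<k. A' j)"
      by (simp only: sum.distrib sum_distrib_left)
    show ?thesis unfolding c1 c2 by (simp add: lessThan_Suc_atMost[symmetric] algebra_simps)
  qed
  finally show ?thesis using hs by (simp add: algebra_simps)
qed



lemma part3:
  assumes st: "stationary c la mu al p" and la: "la > 0" and mu: "mu > 0" and al: "al > 0"
    and c1: "1 \<le> c" and inj: "inj_on (zhat c la mu al) {0..c-1}" and kc: "k \<le> c - 1"
  shows "\<forall>z::complex. norm z \<le> 1 \<longrightarrow> Pihat c p k z =
     z^(c-k) * (\<Sum>j\<le>k. complex_of_real (Ap c la mu al p k j) / (complex_of_real (zhat c la mu al j) - z))"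
  using kc
proof (induction k)
  case 0
  show ?case
  proof (intro allI impI)
    fix z :: complex assume "norm z \<le> 1"
    thus "Pihat c p 0 z = z^(c-0) * (\<Sum>j\<le>0. complex_of_real (Ap c la mu al p 0 j) / (complex_of_real (zhat c la mu al j) - z))"
      using Pihat_base[OF st la al c1] by (simp add: Ap_def)
  qed
next
  case (Suc k')
  define k where "k = Suc k'"
  have k1: "1 \<le> k" and kc: "k < c" using Suc.prems c1 unfolding k_def by auto
  have IH: "\<And>z::complex. norm z \<le> 1 \<Longrightarrow> Pihat c p k' z =
     z^(c-k') * (\<Sum>j\<le>k'. complex_of_real (Ap c la mu al p k' j) / (complex_of_real (zhat c la mu al j) - z))"
    using Suc by simp
  define w where "w j = complex_of_real (zhat c la mu al j)" for j
  define A where "A j = complex_of_real (Ap c la mu al p k j)" for j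
  define A' where "A' j = complex_of_real (Ap c la mu al p k' j)" for j
  define Bc where "Bc = complex_of_real (la + real k * mu + (real c - real k) * al)"
  define lac where "lac = complex_of_real la"
  define kmu where "kmu = complex_of_real (real k * mu)"
  define q where "q = complex_of_real ((real c - real k + 1) * al)"
  define F where "F z = Bc * z - lac * z^2 - kmu" for z
  define Sk where "Sk z = (\<Sum>j\<le>k. A j / (w j - z))" for z
  define Sk' where "Sk' z = (\<Sum>j<k. A' j / (w j - z))" for z
  define K where "K = (\<Sum>j\<le>k. A j * (lac * w j - Bc)) + q * (\<Sum>j<k. A' j)"
  define P where "P = complex_of_real (p (k, c-1))"
  define KMP where "KMP = complex_of_real (real k * mu * p (k,c))"
  define zr where "zr = zk c la mu al k"
  define zhr where "zhr = zhat c la mu al k"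
  have fac: "\<And>x. fk c la mu al k x = - la * (x - zr) * (x - zhr)"
    using root_facts(1)[OF la mu al k1 kc] unfolding zr_def zhr_def .
  have zr0: "0 < zr" and zr1: "zr < 1" using root_facts[OF la mu al k1 kc] unfolding zr_def by auto
  have Fr: "F (complex_of_real x) = complex_of_real (fk c la mu al k x)" for x
    unfolding F_def Bc_def lac_def kmu_def fk_def by simp
  have zh1: "zhat c la mu al j > 1" if "j < c" for j using zhat_gt1[OF la mu al that] .
  have wz: "w j \<noteq> z" if "j < c" "norm z \<le> 1" for j z
  proof
    assume "w j = z"
    hence "norm z = abs (zhat c la mu al j)" unfolding w_def by (metis norm_of_real)
    thus False using zh1[OF that(1)] that(2) by simp
  qed
  have fne: "fk c la mu al k (zhat c la mu al j) \<noteq> 0" if j: "j < k" for j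
  proof -
    have "zhat c la mu al j \<noteq> zr" using zh1[of j] j kc zr1 by simp
    moreover have "zhat c la mu al j \<noteq> zhr"
    proof
      assume "zhat c la mu al j = zhr"
      hence "zhat c la mu al j = zhat c la mu al k" unfolding zhr_def .
      hence "j = k" using inj j kc by (auto dest: inj_onD)
      thus False using j by simp
    qed
    ultimately show ?thesis unfolding fac using la by simp
  qed
  have hA: "\<forall>j<k. A j * (Bc * w j - lac * (w j)^2 - kmu) = q * A' j * w j"
  proof (intro allI impI)
    fix j assume j: "j < k"
    have "Ap c la mu al p k j * fk c la mu al k (zhat c la mu al j)
        = (real c - real k + 1) * al * Ap c la mu al p k' j * zhat c la mu al j"
      using Ap_rec[OF k1, of c la mu al p j] j fne[OF j] unfolding k_def by simp
    hence "complex_of_real (Ap c la mu al p k j) * complex_of_real (fk c la mu al k (zhat c la mu al j))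
        = q * A' j * w j" unfolding q_def A'_def w_def by (simp flip: of_real_mult)
    thus "A j * (Bc * w j - lac * (w j)^2 - kmu) = q * A' j * w j"
      using Fr[of "zhat c la mu al j"] unfolding A_def F_def w_def by simp
  qed
  have hk: "Bc * w k - lac * (w k)^2 - kmu = 0"
    using Fr[of "zhat c la mu al k"] fac[of zhr] unfolding F_def w_def zhr_def by simp
  have hs: "(\<Sum>j\<le>k. A j) = P"
    unfolding A_def P_def using Ap_sum[OF k1, of c la mu al p] by (simp flip: of_real_sum)
  have Fz0: "F (complex_of_real zr) = 0" using Fr[of zr] fac[of zr] by simp
  have key: "F z * (Pihat c p k z - z^(c-k) * Sk z) = z^(c-k) * (- K - KMP)" if z: "norm z \<le> 1" for z
  proof -
    have pf: "F z * Sk z - q * z * Sk' z - lac * P * z = K"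
      unfolding F_def Sk_def Sk'_def K_def
      by (rule pf_step) (use wz[OF _ z] kc hA hk hs in auto)
    have ck: "c - k' = Suc (c - k)" using kc unfolding k_def by simp
    have sk': "(\<Sum>j\<le>k'. A' j / (w j - z)) = Sk' z" unfolding Sk'_def k_def
      by (simp add: lessThan_Suc_atMost)
    have IHz: "Pihat c p k' z = z * z^(c-k) * Sk' z"
      using IH[OF z] unfolding ck sk'[symmetric] A'_def w_def by simp
    have gi: "F z * Pihat c p k z = lac * P * z^(c-k+1) + q * Pihat c p (k-1) z - KMP * z^(c-k)"
      using gen_identity[OF st k1 kc z] unfolding F_def Bc_def lac_def kmu_def q_def P_def KMP_def
      by simp
    have km: "k - 1 = k'" unfolding k_def by simp
    have "F z * (Pihat c p k z - z^(c-k) * Sk z) = F z * Pihat c p k z - z^(c-k) * (F z * Sk z)"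
      by (simp add: algebra_simps)
    also have "\<dots> = lac * P * z^(c-k+1) + q * (z * z^(c-k) * Sk' z) - KMP * z^(c-k)
        - z^(c-k) * (K + q * z * Sk' z + lac * P * z)"
      unfolding gi km IHz using pf by (simp add: algebra_simps)
    also have "\<dots> = z^(c-k) * (- K - KMP)" by (simp add: algebra_simps)
    finally show ?thesis .
  qed
  have E0: "- K - KMP = 0"
  proof -
    have "norm (complex_of_real zr) \<le> 1" using zr0 zr1 by simp
    from key[OF this] have "complex_of_real zr ^ (c-k) * (- K - KMP) = 0" unfolding Fz0 by simp
    thus ?thesis using zr0 by simp
  qed
  have coef: "la + real k * mu + (real c - real k) * al = la * (zr + zhr)" "real k * mu = la * zr * zhr"
  proof -
    have "fk c la mu al k 0 = - la * (0 - zr) * (0 - zhr)" by (rule fac)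
    thus k0: "real k * mu = la * zr * zhr" unfolding fk_def by simp
    have "fk c la mu al k 1 = - la * (1 - zr) * (1 - zhr)" by (rule fac)
    thus "la + real k * mu + (real c - real k) * al = la * (zr + zhr)" unfolding fk_def using k0
      by (simp add: algebra_simps)
  qed
  have Ffac: "F z = - lac * (z - complex_of_real zr) * (z - complex_of_real zhr)" for z
  proof -
    have Bc': "Bc = complex_of_real (la * (zr + zhr))" by (simp only: Bc_def coef(1))
    have kmu': "kmu = complex_of_real (la * zr * zhr)" by (simp only: kmu_def coef(2))
    show ?thesis unfolding F_def Bc' kmu' lac_def by (simp add: algebra_simps power2_eq_square)
  qed
  have eq_ne: "Pihat c p k z = z^(c-k) * Sk z" if z: "norm z \<le> 1" and ne: "z \<noteq> complex_of_real zr" for z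
  proof -
    have "z \<noteq> complex_of_real zhr" using wz[OF kc z] unfolding w_def zhr_def by metis
    hence "F z \<noteq> 0" unfolding Ffac using ne la lac_def by simp
    thus ?thesis using key[OF z] E0 by simp
  qed
  have eq_all: "Pihat c p k z = z^(c-k) * Sk z" if z: "norm z \<le> 1" for z
  proof (cases "z = complex_of_real zr")
    case False thus ?thesis using eq_ne[OF z] by simp
  next
    case True
    define z0 where "z0 = complex_of_real zr"
    have z0b: "z0 \<in> ball 0 1" unfolding z0_def using zr0 zr1 by simp
    have c1': "continuous_on (ball 0 1) (\<lambda>z::complex. Pihat c p k z)"
      by (rule continuous_on_subset[OF Pihat_cont[OF st] ball_subset_cball]) (use kc in simp)
    have c2': "continuous_on (ball 0 1) (\<lambda>z::complex. z^(c-k) * Sk z)"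
    proof -
      have wz': "w j - x \<noteq> 0" if "j \<le> k" "x \<in> ball 0 1" for j x
        using wz[of j x] kc that by (simp add: dist_norm)
      show ?thesis unfolding Sk_def by (intro continuous_intros) (use wz' in auto)
    qed
    have i1: "isCont (\<lambda>z::complex. Pihat c p k z) z0"
      using continuous_on_interior[OF c1'] z0b by (simp add: interior_open)
    have i2: "isCont (\<lambda>z::complex. z^(c-k) * Sk z) z0"
      using continuous_on_interior[OF c2'] z0b by (simp add: interior_open)
    have ev: "eventually (\<lambda>x. x^(c-k) * Sk x = Pihat c p k x) (at z0)"
    proof -
      have "eventually (\<lambda>x. x \<in> ball 0 1 - {z0}) (at z0)"
        by (rule eventually_at_in_open) (use z0b in auto)
      thus ?thesis
        by eventually_elim (use eq_ne z0_def in \<open>auto simp: less_imp_le\<close>)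
    qed
    have l1: "((\<lambda>z. Pihat c p k z) \<longlongrightarrow> Pihat c p k z0) (at z0)" using i1 by (simp add: isCont_def)
    have l2: "((\<lambda>z. z^(c-k) * Sk z) \<longlongrightarrow> z0^(c-k) * Sk z0) (at z0)" using i2 by (simp add: isCont_def)
    have l2': "((\<lambda>z. Pihat c p k z) \<longlongrightarrow> z0^(c-k) * Sk z0) (at z0)"
      by (rule Lim_transform_eventually[OF l2 ev])
    have "Pihat c p k z0 = z0^(c-k) * Sk z0" using tendsto_unique[OF _ l1 l2'] by simp
    thus ?thesis using True z0_def by simp
  qed
  show ?case unfolding k_def[symmetric]
    using eq_all unfolding Sk_def A_def w_def by blast
qed


theorem lemma3p2:
  fixes c :: nat and la mu al :: real and p :: "nat \<times> nat \<Rightarrow> real" and i :: nat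
  assumes "c \<ge> 3" and "la > 0" and "mu > 0" and "al > 0" and "la < real c * mu"
    and "stationary c la mu al p"
    and "2 \<le> i" and "i \<le> c - 1"
  shows "(\<forall>j\<in>{i+1..c}. p (i, j) = acoef c la mu al p i j + bcoef c la mu al p i j * p (i, j - 1))
       \<and> (\<forall>j\<in>{i+1..c}. acoef c la mu al p i j > 0 \<and> 0 < bcoef c la mu al p i j
                          \<and> bcoef c la mu al p i j < la / (real i * mu))
       \<and> (inj_on (zhat c la mu al) {0..c-1} \<longrightarrow>
           (\<forall>z::complex. norm z \<le> 1 \<longrightarrow>
              Pihat c p i z = z ^ (c - i) *
                (\<Sum>j=0..i. complex_of_real (Acoef c la mu al p i j)
                            / (complex_of_real (zhat c la mu al j) - z))))"
proof -
  note st = assms(6) and la = assms(2) and mu = assms(3) and al = assms(4)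
  have ic: "i < c" using assms(1,8) by simp
  have P: "p (i, j) = acoef c la mu al p i j + bcoef c la mu al p i j * p (i, j - 1)
       \<and> acoef c la mu al p i j > 0 \<and> 0 < bcoef c la mu al p i j
       \<and> bcoef c la mu al p i j < la / (real i * mu)" if j: "j \<in> {i+1..c}" for j
  proof -
    have m: "c - j < c - i" and cm: "c - (c - j) = j" using j by auto
    show ?thesis using ab_props[OF st la mu al assms(7) ic m] unfolding cm acoef_def bcoef_def
      by auto
  qed
  have III: "inj_on (zhat c la mu al) {0..c-1} \<longrightarrow>
           (\<forall>z::complex. norm z \<le> 1 \<longrightarrow>
              Pihat c p i z = z ^ (c - i) *
                (\<Sum>j=0..i. complex_of_real (Acoef c la mu al p i j)
                            / (complex_of_real (zhat c la mu al j) - z)))"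
  proof (intro impI allI)
    fix z :: complex assume inj: "inj_on (zhat c la mu al) {0..c-1}" and z: "norm z \<le> 1"
    have "Pihat c p i z = z^(c-i) * (\<Sum>j\<le>i. complex_of_real (Ap c la mu al p i j) / (complex_of_real (zhat c la mu al j) - z))"
      using part3[OF st la mu al _ inj assms(8)] assms(1) z by simp
    also have "(\<Sum>j\<le>i. complex_of_real (Ap c la mu al p i j) / (complex_of_real (zhat c la mu al j) - z))
       = (\<Sum>j=0..i. complex_of_real (Acoef c la mu al p i j) / (complex_of_real (zhat c la mu al j) - z))"
      using assms(7) by (simp add: Ap_def atLeast0AtMost)
    finally show "Pihat c p i z = z ^ (c - i) *
                (\<Sum>j=0..i. complex_of_real (Acoef c la mu al p i j)
                            / (complex_of_real (zhat c la mu al j) - z))" .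
  qed
  show ?thesis using P III by blast
qed

end
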